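(* Let $T$ be a neutral tree on $n_1\geq 7$ vertices. Then the graph $T^{\dagger}$ (for any choice of pairing in its construction) is neutral.
   Context: All graphs are finite and simple. A leaf is a vertex of degree one. The leaf-connecting operation on a graph $G$ produces $G^{\dagger}$ as follows: (1) for each vertex $v$ of $G$, attach $d_v$ new pendant vertices (leaves) to $v$; (2) repeatedly join a pair of leaves by an edge until no leaf is left (so the new pendant vertices are paired up by a perfect matching). For a graph $G=(V,E)$ with $m=|E|\geq1$ and degrees $d_u$, the assortativity coefficient is $$r(G)=\frac{m^{-1}\sum_{e_{uv}\in E} d_{u}d_{v}-\Big[m^{-1}\sum_{e_{uv}\in E} \tfrac{1}{2}(d_{u}+d_{v})\Big]^{2}}{m^{-1}\sum_{e_{uv}\in E} \tfrac{1}{2}(d^{2}_{u}+d^{2}_{v})-\Big[m^{-1}\sum_{e_{uv}\in E} \tfrac{1}{2}(d_{u}+d_{v})\Big]^{2}},$$ sums over edges counting each edge once, defined whenever the denominator is nonzero; $G$ is neutral if $r(G)$ is defined and equals $0$. *)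

theory Defs
  imports Complex_Main
begin

definition simple_graph :: "'a set \<Rightarrow> 'a set set \<Rightarrow> bool" where
  "simple_graph V E \<longleftrightarrow> finite V \<and>
     (\<forall>e\<in>E. \<exists>u v. e = {u, v} \<and> u \<noteq> v \<and> u \<in> V \<and> v \<in> V)"

definition adj :: "'a set set \<Rightarrow> 'a \<Rightarrow> 'a \<Rightarrow> bool" where
  "adj E u v \<longleftrightarrow> u \<noteq> v \<and> {u, v} \<in> E"

definition deg :: "'a set set \<Rightarrow> 'a \<Rightarrow> nat" where
  "deg E v = card {e \<in> E. v \<in> e}"

definition connected_graph :: "'a set \<Rightarrow> 'a set set \<Rightarrow> bool" where
  "connected_graph V E \<longleftrightarrow>
     (\<forall>u\<in>V. \<forall>v\<in>V. (u, v) \<in> {(x, y). adj E x y}\<^sup>*)"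

definition is_cycle :: "'a set set \<Rightarrow> 'a list \<Rightarrow> bool" where
  "is_cycle E xs \<longleftrightarrow> length xs \<ge> 3 \<and> distinct xs \<and>
     (\<forall>i. Suc i < length xs \<longrightarrow> adj E (xs ! i) (xs ! Suc i)) \<and>
     adj E (last xs) (hd xs)"

definition tree :: "'a set \<Rightarrow> 'a set set \<Rightarrow> bool" where
  "tree V E \<longleftrightarrow> simple_graph V E \<and> V \<noteq> {} \<and> connected_graph V E \<and>
     \<not> (\<exists>xs. is_cycle E xs)"

text \<open>Assortativity coefficient (sums over edges, each edge once; an edge e = {u,v}
  contributes d_u d_v = prod over e, d_u + d_v = sum over e, etc.).\<close>

definition assort_mean :: "'a set set \<Rightarrow> real" where
  "assort_mean E = (1 / real (card E)) * (\<Sum>e\<in>E. (1/2) * (\<Sum>v\<in>e. real (deg E v)))"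

definition assort_num :: "'a set set \<Rightarrow> real" where
  "assort_num E = (1 / real (card E)) * (\<Sum>e\<in>E. (\<Prod>v\<in>e. real (deg E v)))
                  - (assort_mean E)\<^sup>2"

definition assort_den :: "'a set set \<Rightarrow> real" where
  "assort_den E = (1 / real (card E)) * (\<Sum>e\<in>E. (1/2) * (\<Sum>v\<in>e. (real (deg E v))\<^sup>2))
                  - (assort_mean E)\<^sup>2"

definition assortativity :: "'a set set \<Rightarrow> real" where
  "assortativity E = assort_num E / assort_den E"

definition neutral :: "'a set set \<Rightarrow> bool" where
  "neutral E \<longleftrightarrow> finite E \<and> card E \<ge> 1 \<and> assort_den E \<noteq> 0 \<and> assortativity E = 0"

definition perfect_matching :: "'a set \<Rightarrow> 'a set set \<Rightarrow> bool" where
  "perfect_matching L M \<longleftrightarrow>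
     (\<forall>e\<in>M. \<exists>a b. e = {a, b} \<and> a \<noteq> b \<and> a \<in> L \<and> b \<in> L) \<and>
     (\<forall>l\<in>L. \<exists>!e. e \<in> M \<and> l \<in> e)"

text \<open>(V', E') is a possible result G-dagger of the leaf-connecting operation applied to (V, E):
  a set L of new vertices, each new vertex l pendant to its parent p l, vertex v receiving
  exactly d_v new pendant vertices, and the new vertices paired up by a perfect matching M.\<close>
definition leaf_connect :: "'a set \<Rightarrow> 'a set set \<Rightarrow> 'a set \<Rightarrow> 'a set set \<Rightarrow> bool" where
  "leaf_connect V E V' E' \<longleftrightarrow>
     (\<exists>L p M. finite L \<and> L \<inter> V = {} \<and> (\<forall>l\<in>L. p l \<in> V) \<and>
        (\<forall>v\<in>V. card {l \<in> L. p l = v} = deg E v) \<and>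
        perfect_matching L M \<and>
        V' = V \<union> L \<and> E' = E \<union> (\<lambda>l. {l, p l}) ` L \<union> M)"

end

theory Submission imports Defs begin

lemma handshake_gen:
  fixes g :: "'a \<Rightarrow> real"
  assumes "finite V" "finite E" "\<forall>e\<in>E. e \<subseteq> V"
  shows "(\<Sum>v\<in>V. real (deg E v) * g v) = (\<Sum>e\<in>E. \<Sum>v\<in>e. g v)"
proof -
  have "(\<Sum>v\<in>V. real (deg E v) * g v) = (\<Sum>v\<in>V. \<Sum>e\<in>{e. e \<in> E \<and> v \<in> e}. g v)"
    by (simp add: deg_def)
  also have "\<dots> = (\<Sum>e\<in>E. \<Sum>v\<in>{v. v \<in> V \<and> v \<in> e}. g v)"
    by (rule sum.swap_restrict[OF assms(1,2)])
  also have "\<dots> = (\<Sum>e\<in>E. \<Sum>v\<in>e. g v)"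
    using assms(3) by (intro sum.cong refl) (metis (no_types, lifting) Collect_mem_eq Collect_cong subsetD)
  finally show ?thesis .
qed

lemma fiber_sum:
  fixes g :: "'a \<Rightarrow> real"
  assumes "finite L" "finite V" "\<forall>l\<in>L. p l \<in> V"
  shows "(\<Sum>l\<in>L. g (p l)) = (\<Sum>v\<in>V. real (card {l \<in> L. p l = v}) * g v)"
proof -
  have "(\<Sum>l\<in>L. g (p l)) = (\<Sum>v\<in>V. \<Sum>l\<in>{l. l \<in> L \<and> p l = v}. g (p l))"
    by (rule sum.group[symmetric]) (use assms in auto)
  also have "\<dots> = (\<Sum>v\<in>V. \<Sum>l\<in>{l. l \<in> L \<and> p l = v}. g v)"
    by (intro sum.cong refl) auto
  finally show ?thesis by simp
qed

theorem lemma4: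
  fixes V V' :: "'a set" and E E' :: "'a set set"
  assumes "tree V E"
    and "card V \<ge> 7"
    and "neutral E"
    and "leaf_connect V E V' E'"
  shows "neutral E'"
proof -
  have sg: "simple_graph V E" using assms(1) by (simp add: tree_def)
  have finV: "finite V" using sg by (simp add: simple_graph_def)
  have Eform: "\<forall>e\<in>E. \<exists>u v. e = {u, v} \<and> u \<noteq> v \<and> u \<in> V \<and> v \<in> V"
    using sg by (simp add: simple_graph_def)
  have EsubV: "\<forall>e\<in>E. e \<subseteq> V"
  proof
    fix e assume "e \<in> E"
    then obtain u v where "e = {u, v}" "u \<in> V" "v \<in> V" using Eform by blast
    then show "e \<subseteq> V" by simp
  qed
  have Ecard: "\<forall>e\<in>E. card e = 2"
  proof
    fix e assume "e \<in> E"
    then obtain u v where "e = {u, v}" "u \<noteq> v" using Eform by blast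
    then show "card e = 2" by simp
  qed
  have finE: "finite E" using assms(3) by (simp add: neutral_def)
  have m1: "card E \<ge> 1" using assms(3) by (simp add: neutral_def)
  obtain L p M where finL: "finite L" and LV: "L \<inter> V = {}" and pV: "\<forall>l\<in>L. p l \<in> V"
    and cardp: "\<forall>v\<in>V. card {l \<in> L. p l = v} = deg E v"
    and pm: "perfect_matching L M" and E'def: "E' = E \<union> (\<lambda>l. {l, p l}) ` L \<union> M"
    using assms(4) unfolding leaf_connect_def by blast
  define P where "P = (\<lambda>l. {l, p l}) ` L"
  have Mform: "\<forall>e\<in>M. \<exists>a b. e = {a, b} \<and> a \<noteq> b \<and> a \<in> L \<and> b \<in> L"
    and Muniq: "\<forall>l\<in>L. \<exists>!e. e \<in> M \<and> l \<in> e" using pm by (auto simp: perfect_matching_def)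
  have MsubL: "\<forall>e\<in>M. e \<subseteq> L"
  proof
    fix e assume "e \<in> M"
    then obtain u v where "e = {u, v}" "u \<in> L" "v \<in> L" using Mform by blast
    then show "e \<subseteq> L" by simp
  qed
  have Mcard: "\<forall>e\<in>M. card e = 2"
  proof
    fix e assume "e \<in> M"
    then obtain u v where "e = {u, v}" "u \<noteq> v" using Mform by blast
    then show "card e = 2" by simp
  qed
  have Mne: "\<forall>e\<in>M. e \<noteq> {}" using Mcard by fastforce
  have Muniq2: "\<And>l e e'. l \<in> L \<Longrightarrow> e \<in> M \<Longrightarrow> e' \<in> M \<Longrightarrow> l \<in> e \<Longrightarrow> l \<in> e' \<Longrightarrow> e = e'"
    using Muniq unfolding Ex1_def by blast
  have Mex: "\<And>l. l \<in> L \<Longrightarrow> \<exists>e\<in>M. l \<in> e"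
    using Muniq unfolding Ex1_def by blast
  have finM: "finite M"
    by (rule finite_subset[of M "Pow L"]) (use MsubL finL in auto)
  have LVd: "\<And>x. x \<in> L \<Longrightarrow> x \<in> V \<Longrightarrow> False" using LV by (metis IntI empty_iff)
  have injP: "inj_on (\<lambda>l. {l, p l}) L"
  proof (rule inj_onI)
    fix x y assume xy: "x \<in> L" "y \<in> L" "{x, p x} = {y, p y}"
    then have "x \<in> {y, p y}" by (metis insertI1)
    then have "x = y \<or> x = p y" by simp
    then show "x = y" using xy pV LVd by metis
  qed
  have lnp: "\<forall>l\<in>L. l \<noteq> p l" using LVd pV by metis
  have finP: "finite P" unfolding P_def using finL by simp
  have dEP: "E \<inter> P = {}"
  proof (rule ccontr)
    assume "E \<inter> P \<noteq> {}"
    then obtain l where "l \<in> L" "{l, p l} \<in> E" unfolding P_def by auto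
    then show False using EsubV LVd by (metis insert_subset)
  qed
  have dEM: "E \<inter> M = {}"
  proof (rule ccontr)
    assume "E \<inter> M \<noteq> {}"
    then obtain e where "e \<in> E" "e \<in> M" by blast
    then have "e \<subseteq> V" "e \<subseteq> L" "e \<noteq> {}" using EsubV MsubL Mne by auto
    then show False using LVd by (metis subset_iff ex_in_conv)
  qed
  have dPM: "P \<inter> M = {}"
  proof (rule ccontr)
    assume "P \<inter> M \<noteq> {}"
    then obtain l where "l \<in> L" "{l, p l} \<in> M" unfolding P_def by auto
    then show False using MsubL LVd pV by (metis insert_subset)
  qed
  define m where "m = card E"
  have mpos: "real m > 0" using m1 m_def by simp
  have cardL: "card L = 2 * m"
  proof -
    have "real (card L) = (\<Sum>l\<in>L. (\<lambda>_. 1::real) (p l))" by simp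
    also have "\<dots> = (\<Sum>v\<in>V. real (card {l \<in> L. p l = v}) * 1)"
      by (rule fiber_sum[OF finL finV pV])
    also have "\<dots> = (\<Sum>v\<in>V. real (deg E v) * 1)" using cardp by simp
    also have "\<dots> = (\<Sum>e\<in>E. \<Sum>v\<in>e. (1::real))" by (rule handshake_gen[OF finV finE EsubV])
    also have "\<dots> = (\<Sum>e\<in>E. 2)" using Ecard by (intro sum.cong) auto
    finally show ?thesis by (simp add: m_def)
  qed
  have cardM: "card M = m"
  proof -
    have "\<Union>M = L" using MsubL Mex by blast
    moreover have "pairwise disjnt M"
      unfolding pairwise_def disjnt_def using Muniq2 MsubL by blast
    ultimately have "card L = sum card M"
      using card_Union_disjoint[of M] finL MsubL by (metis finite_subset)
    also have "\<dots> = 2 * card M" using Mcard by simp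
    finally show ?thesis using cardL by simp
  qed
  have cardP: "card P = 2 * m" unfolding P_def using card_image[OF injP] cardL by simp
  have cardE': "card E' = 4 * m"
    unfolding E'def P_def[symmetric]
    using card_Un_disjoint finE finP finM dEP dEM dPM cardP cardM m_def
    by (simp add: card_Un_disjoint Int_Un_distrib2)
  have finE': "finite E'" unfolding E'def P_def[symmetric] using finE finP finM by simp
  have degV: "deg E' v = 2 * deg E v" if "v \<in> V" for v
  proof -
    have "{e \<in> E'. v \<in> e} = {e \<in> E. v \<in> e} \<union> (\<lambda>l. {l, p l}) ` {l \<in> L. p l = v}"
      unfolding E'def using that LV MsubL by auto
    moreover have "{e \<in> E. v \<in> e} \<inter> (\<lambda>l. {l, p l}) ` {l \<in> L. p l = v} = {}"
      using EsubV LV by blast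
    moreover have "card ((\<lambda>l. {l, p l}) ` {l \<in> L. p l = v}) = deg E v"
    proof -
      have "card ((\<lambda>l. {l, p l}) ` {l \<in> L. p l = v}) = card {l \<in> L. p l = v}"
        by (rule card_image[OF inj_on_subset[OF injP]]) auto
      then show ?thesis using cardp that by simp
    qed
    ultimately show ?thesis unfolding deg_def
      using finE finL by (simp add: card_Un_disjoint)
  qed
  have degL: "deg E' l = 2" if lL: "l \<in> L" for l
  proof -
    obtain e0 where e0: "e0 \<in> M" "l \<in> e0" and u: "\<And>e. e \<in> M \<Longrightarrow> l \<in> e \<Longrightarrow> e = e0"
      using Mex[OF lL] Muniq2[OF lL] by blast
    have "{e \<in> E'. l \<in> e} = {{l, p l}, e0}"
    proof
      show "{e \<in> E'. l \<in> e} \<subseteq> {{l, p l}, e0}"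
      proof
        fix e assume "e \<in> {e \<in> E'. l \<in> e}"
        then have "e \<in> E \<or> e \<in> P \<or> e \<in> M" "l \<in> e" unfolding E'def P_def by auto
        moreover have "e \<notin> E" using \<open>l \<in> e\<close> EsubV LV that by blast
        moreover have "e \<in> P \<Longrightarrow> e = {l, p l}" unfolding P_def using \<open>l \<in> e\<close> that LV pV by auto
        ultimately show "e \<in> {{l, p l}, e0}" using u by blast
      qed
      show "{{l, p l}, e0} \<subseteq> {e \<in> E'. l \<in> e}" unfolding E'def using e0 that by auto
    qed
    moreover have "{l, p l} \<noteq> e0" using e0 MsubL that pV LV by blast
    ultimately show ?thesis unfolding deg_def by simp
  qed
  define d where "d v = real (deg E v)" for v
  define D where "D v = real (deg E' v)" for v
  define x where "x = real m"
  have xpos: "x > 0" using mpos x_def by simp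
  have DV: "D v = 2 * d v" if "v \<in> V" for v using degV[OF that] by (simp add: D_def d_def)
  have DL: "D l = 2" if "l \<in> L" for l using degL[OF that] by (simp add: D_def)
  have lift: "(\<Sum>l\<in>L. g (p l)) = (\<Sum>e\<in>E. \<Sum>v\<in>e. g v)" for g :: "'a \<Rightarrow> real"
  proof -
    have "(\<Sum>l\<in>L. g (p l)) = (\<Sum>v\<in>V. real (card {l \<in> L. p l = v}) * g v)"
      by (rule fiber_sum[OF finL finV pV])
    also have "\<dots> = (\<Sum>v\<in>V. real (deg E v) * g v)" using cardp by simp
    also have "\<dots> = (\<Sum>e\<in>E. \<Sum>v\<in>e. g v)" by (rule handshake_gen[OF finV finE EsubV])
    finally show ?thesis .
  qed
  have split: "(\<Sum>e\<in>E'. F e) = (\<Sum>e\<in>E. F e) + (\<Sum>l\<in>L. F {l, p l}) + (\<Sum>e\<in>M. F e)"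
    for F :: "'a set \<Rightarrow> real"
  proof -
    have "(\<Sum>e\<in>E'. F e) = (\<Sum>e\<in>E \<union> P. F e) + (\<Sum>e\<in>M. F e)"
      unfolding E'def P_def[symmetric]
      by (rule sum.union_disjoint) (use finE finP finM dEM dPM in auto)
    also have "(\<Sum>e\<in>E \<union> P. F e) = (\<Sum>e\<in>E. F e) + (\<Sum>e\<in>P. F e)"
      by (rule sum.union_disjoint) (use finE finP dEP in auto)
    also have "(\<Sum>e\<in>P. F e) = (\<Sum>l\<in>L. F {l, p l})"
      unfolding P_def by (rule sum.reindex[OF injP, unfolded comp_def])
    finally show ?thesis .
  qed
  have gen: "(\<Sum>e\<in>E'. \<Sum>v\<in>e. h (D v)) = 2 * (\<Sum>e\<in>E. \<Sum>v\<in>e. h (2 * d v)) + 4 * x * h 2"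
    for h :: "real \<Rightarrow> real"
  proof -
    have sE: "(\<Sum>e\<in>E. \<Sum>v\<in>e. h (D v)) = (\<Sum>e\<in>E. \<Sum>v\<in>e. h (2 * d v))"
      using EsubV DV by (intro sum.cong refl) (metis subsetD)
    have sP: "(\<Sum>l\<in>L. \<Sum>v\<in>{l, p l}. h (D v)) = (\<Sum>l\<in>L. h 2 + h (2 * d (p l)))"
      using lnp DL DV pV by (intro sum.cong refl) simp
    also have "\<dots> = real (card L) * h 2 + (\<Sum>l\<in>L. h (2 * d (p l)))"
      by (simp add: sum.distrib)
    also have "\<dots> = 2 * x * h 2 + (\<Sum>e\<in>E. \<Sum>v\<in>e. h (2 * d v))"
      using lift[of "\<lambda>v. h (2 * d v)"] cardL x_def by simp
    finally have sP: "(\<Sum>l\<in>L. \<Sum>v\<in>{l, p l}. h (D v)) = 2 * x * h 2 + (\<Sum>e\<in>E. \<Sum>v\<in>e. h (2 * d v))" .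
    have "(\<Sum>e\<in>M. \<Sum>v\<in>e. h (D v)) = (\<Sum>e\<in>M. 2 * h 2)"
    proof (intro sum.cong refl)
      fix e assume "e \<in> M"
      then have "(\<Sum>v\<in>e. h (D v)) = (\<Sum>v\<in>e. h 2)" using MsubL DL by (intro sum.cong refl) (metis subsetD)
      then show "(\<Sum>v\<in>e. h (D v)) = 2 * h 2" using Mcard \<open>e \<in> M\<close> by simp
    qed
    also have "\<dots> = 2 * x * h 2" using cardM x_def by simp
    finally have sM: "(\<Sum>e\<in>M. \<Sum>v\<in>e. h (D v)) = 2 * x * h 2" .
    show ?thesis unfolding split[of "\<lambda>e. \<Sum>v\<in>e. h (D v)"] sE sP sM by simp
  qed
  define S1 where "S1 = (\<Sum>e\<in>E. \<Sum>v\<in>e. d v)"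
  define S2 where "S2 = (\<Sum>e\<in>E. \<Sum>v\<in>e. (d v)\<^sup>2)"
  define Pr where "Pr = (\<Sum>e\<in>E. \<Prod>v\<in>e. d v)"
  have prod': "(\<Sum>e\<in>E'. \<Prod>v\<in>e. D v) = 4 * Pr + 4 * S1 + 4 * x"
  proof -
    have sE: "(\<Sum>e\<in>E. \<Prod>v\<in>e. D v) = (\<Sum>e\<in>E. 4 * (\<Prod>v\<in>e. d v))"
    proof (intro sum.cong refl)
      fix e assume e: "e \<in> E"
      then have "(\<Prod>v\<in>e. D v) = (\<Prod>v\<in>e. 2 * d v)" using EsubV DV by (intro prod.cong refl) (metis subsetD)
      also have "\<dots> = 2 ^ card e * (\<Prod>v\<in>e. d v)" by (simp add: prod.distrib)
      finally show "(\<Prod>v\<in>e. D v) = 4 * (\<Prod>v\<in>e. d v)" using Ecard e by simp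
    qed
    have sP: "(\<Sum>l\<in>L. \<Prod>v\<in>{l, p l}. D v) = (\<Sum>l\<in>L. 4 * d (p l))"
      using lnp DL DV pV by (intro sum.cong refl) simp
    also have "\<dots> = 4 * S1" using lift[of d] by (simp add: S1_def sum_distrib_left[symmetric])
    finally have sP: "(\<Sum>l\<in>L. \<Prod>v\<in>{l, p l}. D v) = 4 * S1" .
    have "(\<Sum>e\<in>M. \<Prod>v\<in>e. D v) = (\<Sum>e\<in>M. 4)"
    proof (intro sum.cong refl)
      fix e assume "e \<in> M"
      then have "(\<Prod>v\<in>e. D v) = (\<Prod>v\<in>e. 2)" using MsubL DL by (intro prod.cong refl) (metis subsetD)
      then show "(\<Prod>v\<in>e. D v) = 4" using Mcard \<open>e \<in> M\<close> by simp
    qed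
    also have "\<dots> = 4 * x" using cardM x_def by simp
    finally have sM: "(\<Sum>e\<in>M. \<Prod>v\<in>e. D v) = 4 * x" .
    show ?thesis unfolding split[of "\<lambda>e. \<Prod>v\<in>e. D v"] sE sP sM Pr_def
      by (simp add: sum_distrib_left)
  qed
  have s1': "(\<Sum>e\<in>E'. \<Sum>v\<in>e. D v) = 4 * S1 + 8 * x"
    using gen[of "\<lambda>t. t"] by (simp add: S1_def sum_distrib_left[symmetric])
  have s2': "(\<Sum>e\<in>E'. \<Sum>v\<in>e. (D v)\<^sup>2) = 8 * S2 + 16 * x"
    using gen[of "\<lambda>t. t\<^sup>2"] by (simp add: S2_def power_mult_distrib sum_distrib_left[symmetric])
  have cnt: "(\<Sum>e\<in>E. \<Sum>v\<in>e. c) = 2 * x * c" for c :: real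
    using Ecard x_def m_def by simp
  have half: "(\<Sum>e\<in>X. (1/2::real) * f e) = (1/2) * (\<Sum>e\<in>X. f e)" for X and f :: "'a set \<Rightarrow> real"
    by (simp add: sum_distrib_left)
  have meanE: "assort_mean E = S1 / (2 * x)"
    unfolding assort_mean_def half d_def[symmetric] S1_def[symmetric] m_def[symmetric] x_def[symmetric] by simp
  have numE: "assort_num E = Pr / x - (S1 / (2 * x))\<^sup>2"
    unfolding assort_num_def meanE d_def[symmetric] Pr_def[symmetric] m_def[symmetric] x_def[symmetric] by simp
  have denE: "assort_den E = S2 / (2 * x) - (S1 / (2 * x))\<^sup>2"
    unfolding assort_den_def meanE half d_def[symmetric] S2_def[symmetric] m_def[symmetric] x_def[symmetric] by simp
  have cE': "real (card E') = 4 * x" using cardE' x_def by simp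
  have meanE': "assort_mean E' = (4 * S1 + 8 * x) / (8 * x)"
    unfolding assort_mean_def half D_def[symmetric] s1' cE' by simp
  have numE': "assort_num E' = (4 * Pr + 4 * S1 + 4 * x) / (4 * x) - ((4 * S1 + 8 * x) / (8 * x))\<^sup>2"
    unfolding assort_num_def meanE' D_def[symmetric] prod' cE' by simp
  have denE': "assort_den E' = (8 * S2 + 16 * x) / (8 * x) - ((4 * S1 + 8 * x) / (8 * x))\<^sup>2"
    unfolding assort_den_def meanE' half D_def[symmetric] s2' cE' by simp
  have n0: "assort_num E = 0" and dn0: "assort_den E \<noteq> 0"
    using assms(3) by (auto simp: neutral_def assortativity_def)
  define mu where "mu = S1 / (2 * x)"
  have cs: "0 \<le> S2 - 2 * mu * S1 + 2 * x * mu\<^sup>2"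
  proof -
    have "(\<Sum>e\<in>E. \<Sum>v\<in>e. (d v - mu)\<^sup>2) = (\<Sum>e\<in>E. (\<Sum>v\<in>e. (d v)\<^sup>2) - 2 * mu * (\<Sum>v\<in>e. d v) + (\<Sum>v\<in>e. mu\<^sup>2))"
    proof (intro sum.cong refl)
      fix e
      have "(\<Sum>v\<in>e. (d v - mu)\<^sup>2) = (\<Sum>v\<in>e. (d v)\<^sup>2 - 2 * mu * d v + mu\<^sup>2)"
        by (intro sum.cong refl) (simp add: power2_diff)
      also have "\<dots> = (\<Sum>v\<in>e. (d v)\<^sup>2) - (\<Sum>v\<in>e. 2 * mu * d v) + (\<Sum>v\<in>e. mu\<^sup>2)"
        by (simp add: sum.distrib sum_subtractf)
      also have "(\<Sum>v\<in>e. 2 * mu * d v) = 2 * mu * (\<Sum>v\<in>e. d v)"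
        by (rule sum_distrib_left[symmetric])
      finally show "(\<Sum>v\<in>e. (d v - mu)\<^sup>2) = (\<Sum>v\<in>e. (d v)\<^sup>2) - 2 * mu * (\<Sum>v\<in>e. d v) + (\<Sum>v\<in>e. mu\<^sup>2)" .
    qed
    also have "\<dots> = S2 - 2 * mu * S1 + 2 * x * mu\<^sup>2"
      using cnt[of "mu\<^sup>2"] by (simp add: S1_def S2_def sum.distrib sum_subtractf sum_distrib_left)
    finally show ?thesis by (metis sum_nonneg zero_le_power2)
  qed
  have A: "Pr / x - mu\<^sup>2 = 0" using n0 numE mu_def by simp
  have B: "S2 / (2 * x) - mu\<^sup>2 \<noteq> 0" using dn0 denE mu_def by simp
  have m2: "(4 * S1 + 8 * x) / (8 * x) = mu + 1" using xpos unfolding mu_def by (simp add: field_simps)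
  have C: "S2 / (2 * x) - mu\<^sup>2 > 0"
  proof -
    have "S2 - 2 * mu * S1 + 2 * x * mu\<^sup>2 = 2 * x * (S2 / (2 * x) - mu\<^sup>2)"
      using xpos unfolding mu_def by (simp add: field_simps power2_eq_square)
    then have "0 \<le> S2 / (2 * x) - mu\<^sup>2" using cs xpos by (simp add: zero_le_mult_iff)
    then show ?thesis using B by linarith
  qed
  have N': "assort_num E' = 0"
  proof -
    have "assort_num E' = Pr / x - mu\<^sup>2" unfolding numE' m2 using xpos unfolding mu_def
      by (simp add: field_simps power2_eq_square)
    then show ?thesis using A by simp
  qed
  have D': "assort_den E' = 2 * (S2 / (2 * x) - mu\<^sup>2) + (mu - 1)\<^sup>2"
    unfolding denE' m2 using xpos unfolding mu_def by (simp add: field_simps power2_eq_square)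
  have D'pos: "assort_den E' > 0" unfolding D' using C by (simp add: add_pos_nonneg)
  show ?thesis unfolding neutral_def assortativity_def
    using finE' cardE' m1 m_def N' D'pos by simp
qed

end
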